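(* If $k=2^i-1$ is a prime (with $i\ge2$), then $k\in\mathcal C_i\setminus\mathcal C_{i-1}$.
   Context: For a positive integer $m$, $\mathcal C_m$ is the set of odd positive integers $k$ for which there exist integers $0\le j_1<j_2<\cdots<j_m\le m+k-2$ with $2^{k+m}-1\equiv \sum_{i=1}^m 2^{j_i}\pmod k$. For $i=2$, $\mathcal C_{1}$ is as defined with $m=1$. *)

theory Defs
  imports "HOL-Number_Theory.Number_Theory"
begin

text \<open>C m: odd positive k admitting indices 0 <= j_1 < ... < j_m <= m+k-2
  (encoded as a set J of exactly m naturals) with 2^(k+m)-1 == sum 2^(j_i) (mod k).\<close>
definition C :: "nat \<Rightarrow> nat set" where
  "C m = {k. odd k \<and> 0 < k \<and>
      (\<exists>J::nat set. card J = m \<and> J \<subseteq> {0..m + k - 2} \<and>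
         [2 ^ (k + m) - 1 = (\<Sum>j\<in>J. 2 ^ j)] (mod k))}"

end

theory Submission imports Defs "HOL-Library.Multiset" begin

lemma weight:
  assumes i: "i \<ge> 1"
  shows "0 < (\<Sum>e\<in>#M. (2::nat)^e) \<Longrightarrow> (2^i-1) dvd (\<Sum>e\<in>#M. (2::nat)^e) \<Longrightarrow> i \<le> size M"
proof (induction "(\<Sum>e\<in>#M. (2::nat)^e) + size M" arbitrary: M rule: less_induct)
  case (less M)
  show ?case
  proof (cases "\<exists>a\<in>#M. a \<ge> i")
    case True
    then obtain a where a: "a \<in># M" "a \<ge> i" by blast
    have szp: "size M > 0" using a by (metis gr0I size_eq_0_iff_empty empty_iff set_mset_empty)
    define M' where "M' = add_mset (a-i) (M - {#a#})"
    have eqM: "M = add_mset a (M - {#a#})" using a by simp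
    have pw: "(2::nat)^a = 2^(a-i) * 2^i" using a by (simp add: power_add[symmetric])
    have sM: "(\<Sum>e\<in>#M. (2::nat)^e) = (\<Sum>e\<in>#M'. (2::nat)^e) + 2^(a-i) * (2^i - 1)"
      apply (subst eqM) unfolding M'_def using pw
      by (simp add: right_diff_distrib')
    have "(1::nat) < 2^i" using i by (metis one_less_numeral_iff one_less_power semiring_norm(76) less_le_trans zero_less_one le_less)
    hence g: "2^(a-i) * (2^i - 1) > (0::nat)" by simp
    have h1: "(\<Sum>e\<in>#M'. (2::nat)^e) + size M' < (\<Sum>e\<in>#M. (2::nat)^e) + size M"
      using sM g a szp unfolding M'_def by (simp add: size_Diff_singleton)
    have h2: "0 < (\<Sum>e\<in>#M'. (2::nat)^e)" unfolding M'_def by simp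
    have h3: "(2^i-1) dvd (\<Sum>e\<in>#M'. (2::nat)^e)"
      using less.prems(2) sM by (simp add: dvd_add_left_iff)
    have "i \<le> size M'" by (rule less.hyps[OF h1 h2 h3])
    moreover have "size M' = size M" unfolding M'_def using a szp by (simp add: size_Diff_singleton)
    ultimately show ?thesis by simp
  next
    case False
    hence lt: "\<forall>a\<in>#M. a < i" by auto
    show ?thesis
    proof (cases "\<exists>a. count M a \<ge> 2")
      case True
      then obtain a where a: "count M a \<ge> 2" by blast
      define M' where "M' = add_mset (a+1) (M - {#a,a#})"
      have sub: "{#a,a#} \<subseteq># M" using a by (simp add: subseteq_mset_def)
      have eqM: "M = {#a,a#} + (M - {#a,a#})" using sub by (metis subset_mset.add_diff_inverse)
      have sM: "(\<Sum>e\<in>#M. (2::nat)^e) = (\<Sum>e\<in>#M'. (2::nat)^e)"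
        apply (subst eqM) unfolding M'_def by simp
      have szM: "size M = size (M - {#a,a#}) + 2" using eqM
        by (metis add.commute size_union size_add_mset size_empty numeral_2_eq_2 Suc_eq_plus1 add.left_neutral)
      have h1: "(\<Sum>e\<in>#M'. (2::nat)^e) + size M' < (\<Sum>e\<in>#M. (2::nat)^e) + size M"
        using sM szM unfolding M'_def by simp
      have "i \<le> size M'" by (rule less.hyps[OF h1]) (use less.prems sM in auto)
      then show ?thesis unfolding M'_def using szM by simp
    next
      case False
      define S where "S = set_mset M"
      have cnt: "\<And>x. count M x \<le> 1" using False by (metis not_le less_2_cases_iff le_less_Suc_eq nat_le_linear one_add_one Suc_1 less_Suc_eq_le)
      have MS: "M = mset_set S"
      proof (rule multiset_eqI)
        fix x
        show "count M x = count (mset_set S) x"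
        proof (cases "x \<in># M")
          case True
          hence "count M x \<ge> 1" by (simp add: Suc_le_eq)
          with cnt[of x] True show ?thesis by (simp add: S_def count_mset_set le_antisym)
        next
          case False thus ?thesis by (simp add: S_def count_mset_set not_in_iff)
        qed
      qed
      have fS: "finite S" by (simp add: S_def)
      have Ssub: "S \<subseteq> {0..<i}" using lt by (auto simp: S_def)
      have sumS: "(\<Sum>e\<in>#M. (2::nat)^e) = (\<Sum>e\<in>S. 2^e)" by (simp add: MS sum_unfold_sum_mset)
      show ?thesis
      proof (rule ccontr)
        assume "\<not> i \<le> size M"
        hence "card S < i" by (simp add: MS fS)
        hence "S \<noteq> {0..<i}" by auto
        then obtain x where x: "x \<in> {0..<i}" "x \<notin> S" using Ssub by blast
        have "(\<Sum>e\<in>S. (2::nat)^e) + 2^x \<le> (\<Sum>e\<in>{0..<i}. 2^e)"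
        proof -
          have "(\<Sum>e\<in>insert x S. (2::nat)^e) \<le> (\<Sum>e\<in>{0..<i}. 2^e)"
            by (rule sum_mono2) (use x Ssub in auto)
          thus ?thesis using x fS by (simp add: add.commute)
        qed
        hence "(\<Sum>e\<in>S. (2::nat)^e) < 2^i - 1" using less_le_trans[OF less_add_same_cancel1[THEN iffD2, OF zero_less_power[of 2 x]]] by (simp add: sum_power2)
        moreover have "2^i - 1 \<le> (\<Sum>e\<in>S. (2::nat)^e)"
          using less.prems sumS by (metis dvd_imp_le)
        ultimately show False by simp
      qed
    qed
  qed
qed

theorem mainTheorem8:
  fixes i :: nat
  assumes "i \<ge> 2" and "prime (2 ^ i - 1 :: nat)"
  shows "(2 ^ i - 1 :: nat) \<in> C i - C (i - 1)"
proof -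
  define p where "p = (2 ^ i - 1 :: nat)"
  have pr: "prime p" using assms p_def by simp
  have "(4::nat) \<le> 2^i" using power_increasing[of 2 i "2::nat"] assms(1) by simp
  hence p3: "p \<ge> 3" and pi: "2^i = p + 1" using p_def by auto
  have oddp: "odd p" proof -
    have "even ((2::nat)^i)" using assms(1) by simp
    thus ?thesis using pi by simp
  qed
  have c1: "[2^i = 1] (mod p)" using pi p3 by (simp add: cong_def mod_Suc)
  have "\<not> p dvd 2" using p3 by (auto dest: dvd_imp_le)
  hence "[2^(p-1) = 1] (mod p)" using fermat_theorem[OF pr] by blast
  hence "[2 * 2^(p-1) = 2 * 1] (mod p)" by (rule cong_mult[OF cong_refl])
  moreover have "(2::nat)^p = 2*2^(p-1)" using p3 by (cases p) auto
  ultimately have fp: "[2^p = 2] (mod p)" by simp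
  have in1: "p \<in> C i"
  proof -
    define J where "J = {1, i+1} \<union> {2..<i}"
    have cJ: "card J = i" unfolding J_def using assms(1) by (simp add: card_insert_if)
    have sJ: "J \<subseteq> {0..i + p - 2}" unfolding J_def using p3 by auto
    have sum: "(\<Sum>j\<in>J. (2::nat)^j) = 2 + 2^(i+1) + (\<Sum>j\<in>{2..<i}. 2^j)"
      unfolding J_def using assms(1) by simp
    have "(\<Sum>j\<in>{0..<i}. (2::nat)^j) = (\<Sum>j\<in>{0..<2}. 2^j) + (\<Sum>j\<in>{2..<i}. 2^j)"
      using assms(1) by (metis sum.atLeastLessThan_concat zero_le)
    hence "(\<Sum>j\<in>{2..<i}. (2::nat)^j) = p - 3" by (simp add: sum_power2 p_def numeral_3_eq_3)
    hence sv: "(\<Sum>j\<in>J. (2::nat)^j) = 3 * p + 1" using sum pi p3 by simp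
    have "[2^(p+i) = 2] (mod p)" unfolding power_add using cong_mult[OF fp c1] by simp
    hence "[2^(p+i) - 1 = 2 - 1] (mod p)" by (rule cong_diff_nat[OF _ cong_refl]) simp_all
    hence "[2^(p+i) - 1 = 1] (mod p)" by simp
    moreover have "[1 = 3 * p + 1] (mod p)" using p3 by (simp add: cong_def mod_Suc)
    ultimately have "[2^(p+i) - 1 = (\<Sum>j\<in>J. (2::nat)^j)] (mod p)" using sv cong_trans by simp
    thus ?thesis unfolding C_def using oddp p3 cJ sJ by (auto simp: add.commute)
  qed
  have nin: "p \<notin> C (i-1)"
  proof
    assume "p \<in> C (i-1)"
    then obtain J where cJ: "card J = i - 1" and sJ: "J \<subseteq> {0..(i-1) + p - 2}"
      and cg: "[2^(p + (i-1)) - 1 = (\<Sum>j\<in>J. (2::nat)^j)] (mod p)" unfolding C_def by auto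
    have fJ: "finite J" using sJ finite_subset by blast
    have "[2^(p + (i-1)) = 2 * 2^(i-1)] (mod p)" unfolding power_add by (rule cong_mult[OF fp cong_refl])
    moreover have "2 * 2^(i-1) = (2::nat)^i" using assms(1) by (cases i) auto
    ultimately have "[2^(p + (i-1)) = 1] (mod p)" using c1 by (metis cong_trans)
    hence "[2^(p + (i-1)) - 1 = 1 - 1] (mod p)" by (rule cong_diff_nat[OF _ cong_refl]) simp_all
    hence "[(\<Sum>j\<in>J. (2::nat)^j) = 0] (mod p)" using cong_trans[OF cong_sym[OF cg]] by simp
    hence "p dvd (\<Sum>j\<in>J. (2::nat)^j)" by (simp add: cong_0_iff)
    moreover have "J \<noteq> {}" using cJ assms(1) by auto
    hence "0 < (\<Sum>j\<in>J. (2::nat)^j)" using fJ by (simp add: sum_pos)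
    ultimately have "i \<le> size (mset_set J)"
      using weight[of i "mset_set J"] assms(1) by (simp add: sum_unfold_sum_mset p_def)
    thus False using cJ fJ assms(1) by simp
  qed
  show ?thesis using in1 nin p_def by simp
qed

end
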